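(* Let $l(x)=x\,(1-2\Phi(-x))+2\phi(x)$. Then for all $x>0$, $$\frac{l(x)\,\big(\tfrac12-\Phi(-x)\big)}{x}<\frac12.$$
   Context: $\phi$ and $\Phi$ denote the standard normal density and cumulative distribution function. *)

theory Defs
  imports "HOL-Probability.Probability"
begin

definition std_normal_cdf :: "real \<Rightarrow> real" where
  "std_normal_cdf x = (LINT t:{..x}|lborel. std_normal_density t)"

definition lfun :: "real \<Rightarrow> real" where
  "lfun x = x * (1 - 2 * std_normal_cdf (- x)) + 2 * std_normal_density x"

end

theory Submission
  imports Defs
begin

lemma phi_even: "std_normal_density (-t) = std_normal_density t"
  by (simp add: std_normal_density_def)

lemma cdf_reflect: "std_normal_cdf (-x) = (LBINT t:{x..}. std_normal_density t)"
proof -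
  have "std_normal_cdf (-x) = (LBINT t:{t. - t \<in> {..-x}}. std_normal_density (- t))"
    unfolding std_normal_cdf_def by (rule set_integral_reflect)
  also have "{t. - t \<in> {..-x}} = {x..}" by auto
  finally show ?thesis by (simp add: phi_even)
qed

lemma int_ind: "S \<in> sets lborel \<Longrightarrow> integrable lborel (\<lambda>t. indicator S t * std_normal_density t)"
  using integrable_mult_indicator[of S lborel std_normal_density] by simp

lemma deriv_G:
  fixes c :: real
  shows "((\<lambda>t. - (c * exp (- t\<^sup>2 / 2) * t / (t\<^sup>2 + 1))) has_real_derivative
     (c * exp (- t\<^sup>2 / 2) * (1 - 2 / (t\<^sup>2 + 1)\<^sup>2))) (at t)"
proof -
  have p: "t * t + 1 > (0::real)" by (simp add: add_nonneg_pos)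
  have q: "1 + (t*(t*(t*t)) + t*(t*2)) = (t*t+1)*(t*t+1)" by (simp add: algebra_simps)
  have q3: "1 + (t*(t*(t*t)) + t*(t*2)) \<noteq> 0" unfolding q using p by simp
  show ?thesis
    using p q3 by (auto intro!: derivative_eq_intros simp: power2_eq_square field_simps)
qed

definition cc :: real where "cc = 1 / sqrt (2 * pi)"

lemma phi_cc: "std_normal_density t = cc * exp (- t\<^sup>2 / 2)"
  by (simp add: std_normal_density_def cc_def)

lemma cc_pos: "cc > 0" by (simp add: cc_def)

lemma cc_sq: "cc * cc = 1 / (2 * pi)"
  by (simp add: cc_def)

lemma set_int_ind: fixes f :: "real \<Rightarrow> real" shows "(LBINT t:S. f t) = (\<integral>t. indicator S t * f t \<partial>lborel)"
  by (simp add: set_lebesgue_integral_def)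

lemma pieces:
  fixes x :: real assumes x: "x > 0"
  shows "std_normal_cdf (-x) = (\<integral>t. indicator {x..} t * std_normal_density t \<partial>lborel)"
    and "1 = 2 * std_normal_cdf (-x) + (\<integral>t. indicator {-x<..<x} t * std_normal_density t \<partial>lborel)"
proof -
  show q: "std_normal_cdf (-x) = (\<integral>t. indicator {x..} t * std_normal_density t \<partial>lborel)"
    using cdf_reflect[of x] by (simp add: set_int_ind)
  have qa: "std_normal_cdf (-x) = (\<integral>t. indicator {..-x} t * std_normal_density t \<partial>lborel)"
    unfolding std_normal_cdf_def by (simp add: set_int_ind)
  have "1 = (\<integral>t. std_normal_density t \<partial>lborel)" by simp
  also have "\<dots> = (\<integral>t. indicator {..-x} t * std_normal_density t
      + indicator {-x<..<x} t * std_normal_density t + indicator {x..} t * std_normal_density t \<partial>lborel)"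
    using x by (intro Bochner_Integration.integral_cong) (auto split: split_indicator)
  also have "\<dots> = (\<integral>t. indicator {..-x} t * std_normal_density t \<partial>lborel)
      + (\<integral>t. indicator {-x<..<x} t * std_normal_density t \<partial>lborel)
      + (\<integral>t. indicator {x..} t * std_normal_density t \<partial>lborel)"
    by (simp add: int_ind)
  finally show "1 = 2 * std_normal_cdf (-x) + (\<integral>t. indicator {-x<..<x} t * std_normal_density t \<partial>lborel)"
    using q qa by simp
qed

lemma IB_upper:
  fixes x :: real assumes x: "x > 0"
  shows "(\<integral>t. indicator {-x<..<x} t * std_normal_density t \<partial>lborel) \<le> 2 * cc * x"
proof -
  have "(\<integral>t. indicator {-x<..<x} t * std_normal_density t \<partial>lborel)
      \<le> (\<integral>t. (\<lambda>t. cc) t * indicator {-x..x} t \<partial>lborel)"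
  proof (rule integral_mono)
    show "integrable lborel (\<lambda>t. indicator {-x<..<x} t * std_normal_density t)" by (simp add: int_ind)
    show "integrable lborel (\<lambda>t. (\<lambda>t. cc) t * indicator {-x..x} t)"
      by (rule borel_integrable_atLeastAtMost) simp
    fix t :: real
    have "std_normal_density t \<le> cc" unfolding phi_cc using cc_pos by simp
    then show "indicator {-x<..<x} t * std_normal_density t \<le> (\<lambda>t. cc) t * indicator {-x..x} t"
      using cc_pos by (auto split: split_indicator)
  qed
  also have "\<dots> = cc * x - cc * (-x)"
    by (rule integral_FTC_Icc_real[where F="\<lambda>t. cc * t"]) (use x in \<open>auto intro!: derivative_eq_intros\<close>)
  finally show ?thesis by simp
qed

lemma IB_pos:
  fixes x :: real assumes x: "x > 0"
  shows "(\<integral>t. indicator {-x<..<x} t * std_normal_density t \<partial>lborel) > 0"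
proof -
  define k where "k = cc * exp (- x\<^sup>2 / 2)"
  have kpos: "k > 0" unfolding k_def using cc_pos by simp
  have "(\<integral>t. (\<lambda>t. k) t * indicator {-x/2..x/2} t \<partial>lborel)
      \<le> (\<integral>t. indicator {-x<..<x} t * std_normal_density t \<partial>lborel)"
  proof (rule integral_mono)
    show "integrable lborel (\<lambda>t. indicator {-x<..<x} t * std_normal_density t)" by (simp add: int_ind)
    show "integrable lborel (\<lambda>t. (\<lambda>t. k) t * indicator {-x/2..x/2} t)"
      by (rule borel_integrable_atLeastAtMost) simp
    fix t :: real
    show "(\<lambda>t. k) t * indicator {-x/2..x/2} t \<le> indicator {-x<..<x} t * std_normal_density t"
    proof (cases "t \<in> {-x/2..x/2}")
      case True
      then have "\<bar>t\<bar> \<le> \<bar>x\<bar>" using x by auto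
      then have "t\<^sup>2 \<le> x\<^sup>2" by (simp add: abs_le_square_iff)
      then have "k \<le> std_normal_density t" unfolding k_def phi_cc using cc_pos by simp
      moreover have "t \<in> {-x<..<x}" using True x by auto
      ultimately show ?thesis using True by simp
    next
      case False
      then show ?thesis by simp
    qed
  qed
  moreover have "(\<integral>t. (\<lambda>t. k) t * indicator {-x/2..x/2} t \<partial>lborel) = k * (x/2) - k * (-x/2)"
    by (rule integral_FTC_Icc_real[where F="\<lambda>t. k * t"]) (use x in \<open>auto intro!: derivative_eq_intros\<close>)
  moreover have "k * (x/2) - k * (-x/2) = k * x" by (simp add: algebra_simps)
  moreover have "k * x > 0" using kpos x by simp
  ultimately show ?thesis by linarith
qed

definition FF :: "real \<Rightarrow> real" where "FF t = cc * exp (- t\<^sup>2 / 2) * t / (t\<^sup>2 + 1)"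

lemma mills_b:
  fixes x b :: real assumes x: "x > 0" and b: "x \<le> b"
  shows "FF x - FF b \<le> std_normal_cdf (-x)"
proof -
  define f where "f t = cc * exp (- t\<^sup>2 / 2) * (1 - 2 / (t\<^sup>2 + 1)\<^sup>2)" for t :: real
  have nz: "(t\<^sup>2 + 1)\<^sup>2 \<noteq> 0" for t :: real
    by (metis add_nonneg_pos power_not_zero zero_le_power2 zero_less_one less_irrefl)
  have "(\<integral>t. f t * indicator {x..b} t \<partial>lborel) = (\<lambda>t. - FF t) b - (\<lambda>t. - FF t) x"
  proof (rule integral_FTC_Icc_real[OF b])
    fix t :: real
    show "((\<lambda>t. - FF t) has_real_derivative f t) (at t)"
      unfolding FF_def f_def by (rule deriv_G)
    show "isCont f t" unfolding f_def using nz by (intro continuous_intros) auto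
  qed
  moreover have "(\<integral>t. f t * indicator {x..b} t \<partial>lborel)
      \<le> (\<integral>t. indicator {x..} t * std_normal_density t \<partial>lborel)"
  proof (rule integral_mono)
    show "integrable lborel (\<lambda>t. indicator {x..} t * std_normal_density t)" by (simp add: int_ind)
    show "integrable lborel (\<lambda>t. f t * indicator {x..b} t)"
      by (rule borel_integrable_atLeastAtMost) (unfold f_def, use nz in \<open>intro continuous_intros, auto\<close>)
    fix t :: real
    have "0 \<le> 2 / (t\<^sup>2 + 1)\<^sup>2" by simp
    then have "f t \<le> std_normal_density t" unfolding f_def phi_cc using cc_pos
      by (simp add: mult_left_le)
    then show "f t * indicator {x..b} t \<le> indicator {x..} t * std_normal_density t"
      by (auto split: split_indicator)
  qed
  ultimately show ?thesis using pieces(1)[OF x] by simp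
qed

lemma mills:
  fixes x :: real assumes x: "x > 0"
  shows "FF x \<le> std_normal_cdf (-x)"
proof (rule ccontr)
  assume "\<not> ?thesis"
  then have e: "FF x - std_normal_cdf (-x) > 0" by simp
  define e where "e = FF x - std_normal_cdf (-x)"
  define b where "b = x + cc / e + 1"
  have ep: "e > 0" using e e_def by simp
  have bx: "x \<le> b" unfolding b_def using ep cc_pos by simp
  have bpos: "b > 0" using bx x by simp
  have eb: "e * b = e * x + cc + e" unfolding b_def using ep by (simp add: field_simps)
  have "cc < e * b" unfolding eb using ep x by (simp add: add_pos_pos)
  then have "cc / b < e" using bpos by (simp add: divide_less_eq mult.commute)
  moreover have "FF b \<le> cc / b"
  proof -
    have E: "exp (- b\<^sup>2 / 2) \<le> 1" by simp
    have cb: "cc * b > 0" using cc_pos bpos by simp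
    have "cc * exp (- b\<^sup>2 / 2) * b \<le> cc * b"
      using mult_left_mono[OF E, of "cc * b"] cb by (simp add: algebra_simps)
    moreover have d: "b\<^sup>2 + 1 > 0" by (simp add: add_nonneg_pos)
    ultimately have "FF b \<le> cc * b / (b\<^sup>2 + 1)" unfolding FF_def
      by (simp add: divide_right_mono)
    also have "\<dots> \<le> cc * b / (b * b)"
      by (rule divide_left_mono) (use cb bpos in \<open>auto simp: power2_eq_square intro!: mult_pos_pos add_nonneg_pos\<close>)
    also have "\<dots> = cc / b" using bpos by simp
    finally show ?thesis .
  qed
  ultimately have "FF b < e" by simp
  with mills_b[OF x bx] show False unfolding e_def by simp
qed

lemma conc:
  fixes x p q L :: real
  assumes "L \<le> q" "q < 1/2" "x > 0" "-x*L\<^sup>2 + (x+p)*L - p/2 > 0"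
  shows "-x*q\<^sup>2 + (x+p)*q - p/2 > 0"
proof -
  define fL where "fL = -x*L\<^sup>2 + (x+p)*L - p/2"
  have id: "(-x*q\<^sup>2 + (x+p)*q - p/2) * (1/2 - L)
     = (1/2 - q) * fL + (q - L) * (x/4) + x * (q - L) * (1/2 - q) * (1/2 - L)"
    unfolding fL_def by (simp add: field_simps power2_eq_square)
  have "0 < (1/2 - q) * fL" using assms unfolding fL_def by simp
  moreover have "0 \<le> (q - L) * (x/4)" using assms by simp
  moreover have "0 \<le> x * (q - L) * (1/2 - q) * (1/2 - L)" using assms by simp
  ultimately have "0 < (-x*q\<^sup>2 + (x+p)*q - p/2) * (1/2 - L)" unfolding id by linarith
  moreover have "1/2 - L > 0" using assms by simp
  ultimately show ?thesis by (simp add: zero_less_mult_iff)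
qed

lemma small_num:
  fixes s E :: real
  assumes "0 \<le> s" "s \<le> 81/100" "E * (1 + s/2) \<le> 1" "E > 0"
  shows "s + E < 15707/10000"
proof (rule ccontr)
  assume "\<not> ?thesis"
  then have h: "15707/10000 - s \<le> E" by simp
  have "(15707/10000 - s) * (1 + s/2) \<le> E * (1 + s/2)"
    using h assms by (intro mult_right_mono) auto
  then have "(15707/10000 - s) * (1 + s/2) \<le> 1" using assms by linarith
  moreover have "s * s \<le> 81/100 * s" using assms by (intro mult_right_mono) auto
  ultimately show False using assms by (simp add: algebra_simps)
qed

lemma large_num:
  fixes x k :: real
  assumes "9/10 \<le> x" "x < 1" "k \<ge> 35/100"
  shows "2 * x * (k * (1 - x\<^sup>2/2)) > 1 - x^4"
proof -
  have "x\<^sup>2 < 1" using assms by (simp add: power_less_one_iff abs_less_iff)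
  then have "1 - x\<^sup>2/2 > 0" by simp
  then have "2 * x * (k * (1 - x\<^sup>2/2)) \<ge> 2 * x * (35/100 * (1 - x\<^sup>2/2))"
    using assms by (intro mult_left_mono mult_right_mono) auto
  moreover have "2 * x * (35/100 * (1 - x\<^sup>2/2)) > 1 - x^4"
  proof -
    have x3: "x^3 \<ge> (9/10)^3" using assms by (intro power_mono) auto
    have "x^3 * (x - 35/100) \<ge> (9/10)^3 * (55/100)"
      using assms x3 by (intro mult_mono) auto
    moreover have "x^4 = x^3 * x" by (simp add: power_Suc2[symmetric] del: power_Suc)
    ultimately show ?thesis using assms by (simp add: algebra_simps power2_eq_square power3_eq_cube)
  qed
  ultimately show ?thesis by linarith
qed

theorem lemma16:
  fixes x :: real
  assumes "x > 0"
  shows "lfun x * (1/2 - std_normal_cdf (- x)) / x < 1/2"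
proof -
  have x: "x > 0" by fact
  define q where "q = std_normal_cdf (- x)"
  define IB where "IB = (\<integral>t. indicator {-x<..<x} t * std_normal_density t \<partial>lborel)"
  define p where "p = std_normal_density x"
  define E where "E = exp (- x\<^sup>2 / 2)"
  have pE: "p = cc * E" unfolding p_def E_def by (simp add: phi_cc)
  have Epos: "E > 0" unfolding E_def by simp
  have one: "1 = 2 * q + IB" unfolding q_def IB_def using pieces(2)[OF x] .
  have IBu: "IB \<le> 2 * cc * x" unfolding IB_def using IB_upper[OF x] .
  have IBp: "IB > 0" unfolding IB_def using IB_pos[OF x] .
  have qh: "q < 1/2" using one IBp by linarith
  have key: "x/2 - lfun x * (1/2 - q) = 2 * (-x*q\<^sup>2 + (x+p)*q - p/2)"
    unfolding lfun_def q_def p_def by (simp add: algebra_simps power2_eq_square)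
  have fpos: "-x*q\<^sup>2 + (x+p)*q - p/2 > 0"
  proof (cases "x \<le> 9/10")
    case True
    define L where "L = 1/2 - cc * x"
    have Lq: "L \<le> q" unfolding L_def using one IBu by linarith
    have fL: "-x*L\<^sup>2 + (x+p)*L - p/2 = x * (1/4 - cc*cc*x\<^sup>2 - cc*p)"
      unfolding L_def by (simp add: algebra_simps power2_eq_square)
    have e1: "E * (1 + x\<^sup>2/2) \<le> 1"
    proof -
      have "1 + x\<^sup>2/2 \<le> exp (x\<^sup>2/2)" by (rule exp_ge_add_one_self)
      then have "E * (1 + x\<^sup>2/2) \<le> E * exp (x\<^sup>2/2)" using Epos by simp
      also have "E * exp (x\<^sup>2/2) = 1" unfolding E_def by (simp add: exp_minus[symmetric] exp_add[symmetric])
      finally show ?thesis .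
    qed
    have s81: "x\<^sup>2 \<le> 81/100"
    proof -
      have "x\<^sup>2 \<le> (9/10)\<^sup>2" using True x by (intro power_mono) auto
      then show ?thesis by (simp add: power2_eq_square)
    qed
    have sE: "x\<^sup>2 + E < 15707/10000" by (rule small_num) (use s81 e1 Epos in auto)
    have "cc*cc*x\<^sup>2 + cc*p = (x\<^sup>2 + E) / (2*pi)" unfolding pE using cc_sq
      by (simp add: algebra_simps) (simp add: mult.assoc[symmetric] add_divide_distrib)
    also have "\<dots> < 1/4"
    proof -
      have "pi \<ge> 3.141592653588" using pi_approx(1) .
      then show ?thesis using sE by (simp add: divide_less_eq)
    qed
    finally have "-x*L\<^sup>2 + (x+p)*L - p/2 > 0" unfolding fL using x by simp
    then show ?thesis by (rule conc[OF Lq qh x])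
  next
    case False
    define L where "L = FF x"
    have Lq: "L \<le> q" unfolding L_def q_def using mills[OF x] .
    have d: "x\<^sup>2 + 1 > 0" by (simp add: add_nonneg_pos)
    have Lp: "L = p * x / (x\<^sup>2 + 1)" unfolding L_def FF_def pE E_def by simp
    define D where "D = x\<^sup>2 + 1"
    have Dp: "D > 0" unfolding D_def using d .
    have LD: "L * D = p * x" unfolding Lp D_def using d by simp
    have "(-x*L\<^sup>2 + (x+p)*L - p/2) * (2*D\<^sup>2) = -2*x*(L*D)\<^sup>2 + 2*(x+p)*(L*D)*D - p*D\<^sup>2"
      by (simp add: algebra_simps power2_eq_square)
    also have "\<dots> = -2*x*(p*x)\<^sup>2 + 2*(x+p)*(p*x)*D - p*D\<^sup>2" by (simp only: LD)
    also have "\<dots> = p * (x^4 - 1 + 2*x*p)" unfolding D_def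
      by (simp add: algebra_simps power2_eq_square power4_eq_xxxx)
    finally have fL: "(-x*L\<^sup>2 + (x+p)*L - p/2) * (2*D\<^sup>2) = p * (x^4 - 1 + 2*x*p)" .
    have ppos: "p > 0" unfolding pE using cc_pos Epos by simp
    have "x^4 - 1 + 2*x*p > 0"
    proof (cases "x \<ge> 1")
      case True
      then have "x^4 \<ge> 1" by (simp add: one_le_power)
      moreover have "2*x*p > 0" using ppos x by simp
      ultimately show ?thesis by linarith
    next
      case False
      have ccb: "cc \<ge> 35/100"
      proof (rule ccontr)
        assume "\<not> ?thesis"
        then have "cc * cc \<le> 35/100 * (35/100)" using cc_pos by (intro mult_mono) auto
        then have "1 / (2*pi) \<le> 1225/10000" using cc_sq by simp
        then show False using pi_less_4 by (simp add: divide_le_eq)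
      qed
      have "E \<ge> 1 - x\<^sup>2/2" unfolding E_def using exp_ge_add_one_self[of "- x\<^sup>2 / 2"] by simp
      then have "p \<ge> cc * (1 - x\<^sup>2/2)" unfolding pE using cc_pos by simp
      then have "2*x*p \<ge> 2*x*(cc * (1 - x\<^sup>2/2))" using x by simp
      moreover have "2 * x * (cc * (1 - x\<^sup>2/2)) > 1 - x^4"
        by (rule large_num) (use \<open>\<not> x \<le> 9/10\<close> False ccb in auto)
      ultimately show ?thesis by linarith
    qed
    then have "(-x*L\<^sup>2 + (x+p)*L - p/2) * (2*D\<^sup>2) > 0" unfolding fL using ppos by simp
    then have "-x*L\<^sup>2 + (x+p)*L - p/2 > 0" using Dp by (simp add: zero_less_mult_iff)
    then show ?thesis by (rule conc[OF Lq qh x])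
  qed
  have "x/2 - lfun x * (1/2 - q) > 0" unfolding key using fpos by simp
  then have "lfun x * (1/2 - q) < x/2" by simp
  then show ?thesis unfolding q_def[symmetric] using x by (simp add: divide_less_eq)
qed
end
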